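(* For every $\varepsilon>0$ there exist a present-bias parameter $b>1$ and an instance $G$ for which $R_i\ge(2-\varepsilon)R_d$; i.e., the ratio between the minimum total internal reward $R_i$ and the minimum reward $R_d$ achievable with edge deletion can be as high as $2-\varepsilon$.
   Context: An instance is a finite directed acyclic graph $G=(V,E)$ with nonnegative edge costs $c(u,v)$, start node $s$ and target node $t$, where $t$ has no outgoing edges. Reward at $t$ with edge deletion: in a subgraph $H$ of $G$, with reward $R$ at $t$, process nodes in reverse topological order; $t$ is never abandoned and $C_R(t)=0$; for $u\ne t$, among out-edges $(u,v)$ of $H$ with $v$ not abandoned let $P(u,v)=b\,c(u,v)+C_R(v)$; if none exists or all have $P(u,v)>R$, $u$ is abandoned; otherwise the agent moves to $v^*(u)\in\arg\min P(u,v)$ and $C_R(u)=c(u,v^*(u))+C_R(v^*(u))$; the agent reaches $t$ iff $s$ is not abandoned. $R_d$ is the minimum $R$ such that for some subgraph $H$ of $G$ the agent reaches $t$ in $H$ with reward $R$ at $t$. Internal rewards: nonnegative rewards $r(u,v)$ are placed on the edges of $G$ (a reward at $t$ is equivalent to reward on edges entering $t$); the reward on an edge is collected after traversing it and is not multiplied by $b$. Process nodes in reverse topological order; $t$ is not abandoned and $N(t)=0$; for $u\ne t$, among out-edges $(u,v)$ with $v$ not abandoned let $\pi(u,v)=b\,c(u,v)-r(u,v)+N(v)$; if none exists or all have $\pi(u,v)>0$, $u$ is abandoned; otherwise the agent moves to $v^*(u)\in\arg\min\pi(u,v)$ and $N(u)=c(u,v^*(u))-r(u,v^*(u))+N(v^*(u))$.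 $R_i$ is the minimum total $\sum_{e\in E} r(e)$ of internal rewards for which $s$ is not abandoned. *)

theory Defs
  imports Main "HOL.Real"
begin

definition dag_instance :: "nat set \<Rightarrow> (nat \<times> nat) set \<Rightarrow> (nat \<times> nat \<Rightarrow> real) \<Rightarrow> nat \<Rightarrow> nat \<Rightarrow> bool" where
  "dag_instance V E c s t \<longleftrightarrow> finite V \<and> E \<subseteq> V \<times> V \<and> acyclic E \<and> s \<in> V \<and> t \<in> V
     \<and> (\<forall>v. (t, v) \<notin> E) \<and> (\<forall>e\<in>E. 0 \<le> c e)"

text \<open>A labelling (abandoned set ab, chosen successor nxt, perceived cost C) that is
  consistent with the reverse-topological process for reward R at t in the subgraph
  with edge set H.  Since the graph is acyclic, such labellings are exactly the
  outcomes of the process (for the various argmin choices).\<close>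
definition valid_eval_d ::
  "nat set \<Rightarrow> (nat \<times> nat) set \<Rightarrow> (nat \<times> nat \<Rightarrow> real) \<Rightarrow> nat \<Rightarrow> real \<Rightarrow> real
   \<Rightarrow> (nat \<Rightarrow> bool) \<Rightarrow> (nat \<Rightarrow> nat) \<Rightarrow> (nat \<Rightarrow> real) \<Rightarrow> bool" where
  "valid_eval_d V H c t b R ab nxt C \<longleftrightarrow>
     \<not> ab t \<and> C t = 0 \<and>
     (\<forall>u\<in>V. u \<noteq> t \<longrightarrow>
        (let A = {v. (u, v) \<in> H \<and> \<not> ab v};
             P = (\<lambda>v. b * c (u, v) + C v)
         in (ab u \<longleftrightarrow> (A = {} \<or> (\<forall>v\<in>A. P v > R))) \<and>
            (\<not> ab u \<longrightarrow> nxt u \<in> A \<and> (\<forall>v\<in>A. P (nxt u) \<le> P v)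
                        \<and> C u = c (u, nxt u) + C (nxt u))))"

definition reaches_d ::
  "nat set \<Rightarrow> (nat \<times> nat) set \<Rightarrow> (nat \<times> nat \<Rightarrow> real) \<Rightarrow> nat \<Rightarrow> nat \<Rightarrow> real \<Rightarrow> real \<Rightarrow> bool" where
  "reaches_d V H c s t b R \<longleftrightarrow> (\<exists>ab nxt C. valid_eval_d V H c t b R ab nxt C \<and> \<not> ab s)"

definition feasible_d ::
  "nat set \<Rightarrow> (nat \<times> nat) set \<Rightarrow> (nat \<times> nat \<Rightarrow> real) \<Rightarrow> nat \<Rightarrow> nat \<Rightarrow> real \<Rightarrow> real set" where
  "feasible_d V E c s t b = {R. 0 \<le> R \<and> (\<exists>H \<subseteq> E. reaches_d V H c s t b R)}"

definition valid_eval_i ::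
  "nat set \<Rightarrow> (nat \<times> nat) set \<Rightarrow> (nat \<times> nat \<Rightarrow> real) \<Rightarrow> nat \<Rightarrow> real \<Rightarrow> (nat \<times> nat \<Rightarrow> real)
   \<Rightarrow> (nat \<Rightarrow> bool) \<Rightarrow> (nat \<Rightarrow> nat) \<Rightarrow> (nat \<Rightarrow> real) \<Rightarrow> bool" where
  "valid_eval_i V E c t b r ab nxt N \<longleftrightarrow>
     \<not> ab t \<and> N t = 0 \<and>
     (\<forall>u\<in>V. u \<noteq> t \<longrightarrow>
        (let A = {v. (u, v) \<in> E \<and> \<not> ab v};
             \<pi> = (\<lambda>v. b * c (u, v) - r (u, v) + N v)
         in (ab u \<longleftrightarrow> (A = {} \<or> (\<forall>v\<in>A. \<pi> v > 0))) \<and>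
            (\<not> ab u \<longrightarrow> nxt u \<in> A \<and> (\<forall>v\<in>A. \<pi> (nxt u) \<le> \<pi> v)
                        \<and> N u = c (u, nxt u) - r (u, nxt u) + N (nxt u))))"

definition reaches_i ::
  "nat set \<Rightarrow> (nat \<times> nat) set \<Rightarrow> (nat \<times> nat \<Rightarrow> real) \<Rightarrow> nat \<Rightarrow> nat \<Rightarrow> real \<Rightarrow> (nat \<times> nat \<Rightarrow> real) \<Rightarrow> bool" where
  "reaches_i V E c s t b r \<longleftrightarrow> (\<exists>ab nxt N. valid_eval_i V E c t b r ab nxt N \<and> \<not> ab s)"

definition feasible_i ::
  "nat set \<Rightarrow> (nat \<times> nat) set \<Rightarrow> (nat \<times> nat \<Rightarrow> real) \<Rightarrow> nat \<Rightarrow> nat \<Rightarrow> real \<Rightarrow> real set" where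
  "feasible_i V E c s t b =
     {(\<Sum>e\<in>E. r e) | r. (\<forall>e\<in>E. 0 \<le> r e) \<and> reaches_i V E c s t b r}"

definition is_min :: "real set \<Rightarrow> real \<Rightarrow> bool" where
  "is_min S x \<longleftrightarrow> x \<in> S \<and> (\<forall>y\<in>S. x \<le> y)"

end

theory Submission
  imports Defs
begin

definition gW :: "nat \<Rightarrow> nat \<Rightarrow> bool" where "gW k u \<longleftrightarrow> (\<exists>i<k. u = i*(k*k) + 1)"
definition gz :: "nat \<Rightarrow> nat" where "gz k = k*(k*k)+1"
definition gV :: "nat \<Rightarrow> nat set" where "gV k = {..Suc (gz k)}"
definition gE :: "nat \<Rightarrow> (nat \<times> nat) set" where
  "gE k = {(u,v). (u \<le> gz k \<and> v = Suc u) \<or> (gW k u \<and> v = u + k*k)}"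
definition gp :: "nat \<Rightarrow> real" where "gp k = (real k - 1)/real k"
definition gd :: "nat \<Rightarrow> real" where "gd k = 1/(real k + 1)"
definition gc :: "nat \<Rightarrow> nat \<times> nat \<Rightarrow> real" where
  "gc k = (\<lambda>(u,v). if v = Suc u then (if u = 0 then gp k else if u = gz k then 1
           else if gW k u then 0 else gd k) else gp k)"

lemma gW_bounds: assumes "gW k u" shows "1 \<le> u" "u + k*k \<le> gz k" "u < gz k" "0 < k"
proof -
  obtain i where i: "i < k" "u = i*(k*k)+1" using assms gW_def by auto
  have "(i+1)*(k*k) \<le> k*(k*k)" using i(1) by (intro mult_le_mono1) simp
  moreover have "k*k > 0" using i(1) by simp
  ultimately show "1 \<le> u" "u + k*k \<le> gz k" "u < gz k" "0 < k" using i by (auto simp: gz_def)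
qed

lemma gE_iff: "(u,v) \<in> gE k \<longleftrightarrow> (u \<le> gz k \<and> v = Suc u) \<or> (gW k u \<and> v = u + k*k)"
  by (simp add: gE_def)

lemma gE_less: "(u,v) \<in> gE k \<Longrightarrow> u < v \<and> v \<le> Suc (gz k)"
  using gW_bounds[of k u] by (auto simp: gE_iff)

lemma acyclic_less: assumes "E \<subseteq> {(u,v). (u::nat) < v}" shows "acyclic E"
proof -
  have "(x,y) \<in> E\<^sup>+ \<Longrightarrow> x < y" for x y
    by (induction rule: trancl_induct) (use assms in auto)
  then show ?thesis unfolding acyclic_def by blast
qed

lemma gW_mod: assumes "j < k*k" shows "gW k (i*(k*k)+1+j) \<longleftrightarrow> j = 0 \<and> i < k"
proof
  assume "gW k (i*(k*k)+1+j)"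
  then obtain i' where "i' < k" "i*(k*k)+1+j = i'*(k*k)+1" by (auto simp: gW_def)
  then have e: "i*(k*k)+j = i'*(k*k)" by simp
  then have "(i*(k*k)+j) mod (k*k) = 0" by simp
  then have "j = 0" using assms by simp
  with e \<open>i'<k\<close> show "j = 0 \<and> i < k" using assms by auto
qed (auto simp: gW_def)

lemma dag: "k \<ge> 2 \<Longrightarrow> dag_instance (gV k) (gE k) (gc k) 0 (Suc (gz k))"
  unfolding dag_instance_def
proof (intro conjI)
  assume k: "k \<ge> 2"
  show "finite (gV k)" by (simp add: gV_def)
  show "gE k \<subseteq> gV k \<times> gV k" using gE_less by (fastforce simp: gV_def)
  show "acyclic (gE k)" by (rule acyclic_less) (use gE_less in auto)
  show "0 \<in> gV k" "Suc (gz k) \<in> gV k" by (auto simp: gV_def)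
  show "\<forall>v. (Suc (gz k), v) \<notin> gE k" using gW_bounds by (fastforce simp: gE_iff)
  show "\<forall>e\<in>gE k. 0 \<le> gc k e" using k by (auto simp: gc_def gp_def gd_def)
qed


lemma gW_div: assumes "gW k u" obtains i where "i < k" "u = i*(k*k)+1" "(u - 1) div (k*k) = i"
proof -
  obtain i where i: "i < k" "u = i*(k*k)+1" using assms gW_def by auto
  then show ?thesis using that by simp
qed

lemma gW_next: assumes "gW k u" shows "gW k (u + k*k) \<or> u + k*k = gz k"
proof -
  obtain i where i: "i < k" "u = i*(k*k)+1" using assms gW_def by auto
  show ?thesis
  proof (cases "Suc i < k")
    case True then show ?thesis unfolding gW_def by (intro disjI1 exI[of _ "Suc i"]) (simp add: i)
  next
    case False then have "Suc i = k" using i by simp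
    then show ?thesis using i by (auto simp: gz_def)
  qed
qed

definition gH :: "nat \<Rightarrow> (nat \<times> nat) set" where
  "gH k = {(u,v). (u = 0 \<and> v = 1) \<or> (gW k u \<and> v = u + k*k) \<or> (u = gz k \<and> v = Suc (gz k))}"
definition abD :: "nat \<Rightarrow> nat \<Rightarrow> bool" where
  "abD k u \<longleftrightarrow> u \<noteq> 0 \<and> u \<noteq> gz k \<and> u \<noteq> Suc (gz k) \<and> \<not> gW k u"
definition nxtD :: "nat \<Rightarrow> nat \<Rightarrow> nat" where
  "nxtD k u = (if u = 0 then 1 else if u = gz k then Suc (gz k) else u + k*k)"
definition CD :: "nat \<Rightarrow> nat \<Rightarrow> real" where
  "CD k u = (if u = 0 then gp k + real k * gp k + 1 else if u = Suc (gz k) then 0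
             else real (k - (u - 1) div (k*k)) * gp k + 1)"

lemma gH_sub: "gH k \<subseteq> gE k"
  using gW_bounds by (auto simp: gH_def gE_iff gz_def)

lemma gW1: "k \<ge> 2 \<Longrightarrow> gW k 1" by (auto simp: gW_def)

lemma gp_props: "k \<ge> 2 \<Longrightarrow> 0 \<le> gp k \<and> gp k \<le> 1 \<and> real k * gp k = real k - 1"
  by (auto simp: gp_def field_simps)

lemma gp_kk: "k \<ge> 2 \<Longrightarrow> real k * real k * gp k = real k * real k - real k"
  by (auto simp: gp_def field_simps)

lemma del_eval: assumes k: "k \<ge> 2"
  shows "valid_eval_d (gV k) (gH k) (gc k) (Suc (gz k)) (real (k*k)) (real (k*k)) (abD k) (nxtD k) (CD k)"
  unfolding valid_eval_d_def Let_def
proof (rule conjI, simp add: abD_def, rule conjI, simp add: CD_def, intro ballI impI)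
  fix u assume uV: "u \<in> gV k" and ut: "u \<noteq> Suc (gz k)"
  have p: "0 \<le> gp k" "gp k \<le> 1" "real k * gp k = real k - 1" using gp_props[OF k] by auto
  have z0: "gz k \<noteq> 0" "(gz k - 1) div (k*k) = k" using k by (auto simp: gz_def)
  let ?A = "{v. (u, v) \<in> gH k \<and> \<not> abD k v}"
  let ?P = "\<lambda>v. real (k*k) * gc k (u, v) + CD k v"
  show "abD k u = (?A = {} \<or> (\<forall>v\<in>?A. real (k*k) < ?P v))
        \<and> (\<not> abD k u \<longrightarrow> nxtD k u \<in> ?A \<and> (\<forall>v\<in>?A. ?P (nxtD k u) \<le> ?P v)
             \<and> CD k u = gc k (u, nxtD k u) + CD k (nxtD k u))"
  proof (cases "u = 0")
    case True
    have nW0: "\<not> gW k 0" using gW_bounds(1)[of k 0] by auto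
    have z1: "gz k \<noteq> 1" "gz k \<noteq> 0" using k by (auto simp: gz_def)
    have A: "?A = {1}" using True gW1[OF k] nW0 z1 by (auto simp: gH_def abD_def)
    have "?P 1 = real (k*k)"
      using True p k gW1[OF k] gp_kk[OF k] by (simp add: gc_def CD_def gz_def algebra_simps)
    then show ?thesis using True A p by (auto simp: abD_def nxtD_def gc_def CD_def gz_def)
  next
    case u0: False
    show ?thesis
    proof (cases "u = gz k")
      case True
      have A: "?A = {Suc (gz k)}" using True gW_bounds[of k "gz k"] by (auto simp: gH_def abD_def)
      show ?thesis using True A z0 by (auto simp: abD_def nxtD_def gc_def CD_def)
    next
      case uz: False
      show ?thesis
      proof (cases "gW k u")
        case True
        obtain i where i: "i < k" "u = i*(k*k)+1" "(u - 1) div (k*k) = i" using gW_div[OF True] .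
        have nb: "\<not> abD k (u + k*k)" using gW_next[OF True] by (auto simp: abD_def)
        have A: "?A = {u + k*k}" using True u0 uz nb by (auto simp: gH_def)
        have kk: "k*k \<noteq> 0" using k by simp
        have d2: "(u + k*k - 1) div (k*k) = Suc i" using i kk by simp
        have ne1: "u + k*k \<noteq> Suc u" using k by simp
        have ne0: "u + k*k \<noteq> 0" "u + k*k \<noteq> Suc (gz k)" using gW_bounds[OF True] by auto
        have gc1: "gc k (u, u + k*k) = gp k" using ne1 by (simp add: gc_def)
        have cd1: "CD k (u + k*k) = real (k - Suc i) * gp k + 1" using ne0 d2 u0 k by (simp add: CD_def)
        have "?P (u + k*k) = real k * real k * gp k + real (k - Suc i) * gp k + 1"
          by (simp only: gc1 cd1 of_nat_mult)
        also have "\<dots> \<le> real (k*k)"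
        proof -
          have "real (k - Suc i) \<le> real k - 1" using i by simp
          then have "real (k - Suc i) * gp k \<le> (real k - 1) * 1"
            using p by (intro mult_mono) auto
          then show ?thesis using gp_kk[OF k] by (simp only: of_nat_mult mult_1_right)
        qed
        finally have P: "?P (u + k*k) \<le> real (k*k)" .
        have cd0: "CD k u = real (k - i) * gp k + 1" using i(3) u0 ut by (simp add: CD_def)
        have "real (k - i) = real (k - Suc i) + 1" using i(1) by linarith
        then have C: "CD k u = gc k (u, u + k*k) + CD k (u + k*k)"
          unfolding cd0 gc1 cd1 by (simp add: algebra_simps)
        show ?thesis using A P C True u0 uz by (auto simp: abD_def nxtD_def)
      next
        case False
        have A: "?A = {}" using False u0 uz by (auto simp: gH_def)
        show ?thesis using A False u0 uz ut by (auto simp: abD_def)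
      qed
    qed
  qed
qed


lemma ved_alive:
  assumes "valid_eval_d V H c t b R ab nxt C" "u \<in> V" "u \<noteq> t" "\<not> ab u"
  shows "(u, nxt u) \<in> H \<and> \<not> ab (nxt u) \<and> b * c (u, nxt u) + C (nxt u) \<le> R"
proof -
  let ?A = "{v. (u, v) \<in> H \<and> \<not> ab v}"
  let ?P = "\<lambda>v. b * c (u, v) + C v"
  have h: "(ab u \<longleftrightarrow> (?A = {} \<or> (\<forall>v\<in>?A. ?P v > R))) \<and>
            (\<not> ab u \<longrightarrow> nxt u \<in> ?A \<and> (\<forall>v\<in>?A. ?P (nxt u) \<le> ?P v))"
    using assms unfolding valid_eval_d_def Let_def by blast
  then obtain v where "v \<in> ?A" "?P v \<le> R" using assms(4) by force
  then show ?thesis using h assms(4) by force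
qed

lemma vei_alive:
  assumes "valid_eval_i V E c t b r ab nxt N" "u \<in> V" "u \<noteq> t" "\<not> ab u"
  shows "(u, nxt u) \<in> E \<and> \<not> ab (nxt u) \<and> b * c (u, nxt u) - r (u, nxt u) + N (nxt u) \<le> 0
    \<and> N u = c (u, nxt u) - r (u, nxt u) + N (nxt u)
    \<and> (\<forall>v. (u, v) \<in> E \<and> \<not> ab v \<longrightarrow>
         b * c (u, nxt u) - r (u, nxt u) + N (nxt u) \<le> b * c (u, v) - r (u, v) + N v)"
proof -
  let ?A = "{v. (u, v) \<in> E \<and> \<not> ab v}"
  let ?P = "\<lambda>v. b * c (u, v) - r (u, v) + N v"
  have h: "(ab u \<longleftrightarrow> (?A = {} \<or> (\<forall>v\<in>?A. ?P v > 0))) \<and>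
            (\<not> ab u \<longrightarrow> nxt u \<in> ?A \<and> (\<forall>v\<in>?A. ?P (nxt u) \<le> ?P v)
               \<and> N u = c (u, nxt u) - r (u, nxt u) + N (nxt u))"
    using assms unfolding valid_eval_i_def Let_def by blast
  then obtain v where "v \<in> ?A" "?P v \<le> 0" using assms(4) by force
  then show ?thesis using h assms(4) by force
qed

lemma vei_force:
  assumes "valid_eval_i V E c t b r ab nxt N" "u \<in> V" "u \<noteq> t" "(u, v) \<in> E" "\<not> ab v"
    "b * c (u, v) - r (u, v) + N v \<le> 0"
  shows "\<not> ab u"
proof -
  let ?A = "{v. (u, v) \<in> E \<and> \<not> ab v}"
  let ?P = "\<lambda>v. b * c (u, v) - r (u, v) + N v"
  have h: "(ab u \<longleftrightarrow> (?A = {} \<or> (\<forall>v\<in>?A. ?P v > 0)))"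
    using assms unfolding valid_eval_i_def Let_def by blast
  then show ?thesis using assms(4-6) by force
qed

definition TT :: "(nat \<times> nat) set \<Rightarrow> (nat \<times> nat \<Rightarrow> real) \<Rightarrow> nat \<Rightarrow> real" where
  "TT E r u = (\<Sum>e\<in>{e\<in>E. u \<le> fst e}. r e)"

lemma TT_step:
  assumes "finite E" "\<forall>e\<in>E. 0 \<le> r e" "(u, v) \<in> E" "u < v"
  shows "r (u, v) + TT E r v \<le> TT E r u"
proof -
  have f: "finite {e\<in>E. u \<le> fst e}" using assms(1) by simp
  have sub: "insert (u,v) {e\<in>E. v \<le> fst e} \<subseteq> {e\<in>E. u \<le> fst e}" using assms(3,4) by auto
  have nin: "(u,v) \<notin> {e\<in>E. v \<le> fst e}" using assms(4) by auto
  have "r (u, v) + TT E r v = (\<Sum>e\<in>insert (u,v) {e\<in>E. v \<le> fst e}. r e)"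
    using nin assms(1) by (simp add: TT_def)
  also have "\<dots> \<le> TT E r u" unfolding TT_def
    by (rule sum_mono2[OF f sub]) (use assms(2) in auto)
  finally show ?thesis .
qed

lemma TT_mono:
  assumes "finite E" "\<forall>e\<in>E. 0 \<le> r e" "u \<le> v"
  shows "TT E r v \<le> TT E r u"
  unfolding TT_def by (rule sum_mono2) (use assms in auto)

lemma TT_nonneg: "\<forall>e\<in>E. 0 \<le> r e \<Longrightarrow> 0 \<le> TT E r u"
  unfolding TT_def by (rule sum_nonneg) auto

lemma TT0: "TT E r 0 = (\<Sum>e\<in>E. r e)"
  unfolding TT_def by simp

lemma gE_out: "(u, v) \<in> gE k \<Longrightarrow> u < gz k \<Longrightarrow> u < v \<and> v \<le> gz k"
  using gW_bounds[of k u] by (auto simp: gE_iff)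

lemma gE_out_z: "(gz k, v) \<in> gE k \<Longrightarrow> v = Suc (gz k)"
  using gW_bounds[of k "gz k"] by (auto simp: gE_iff)

lemma del_lb:
  assumes k: "k \<ge> 2" and H: "H \<subseteq> gE k"
    and ve: "valid_eval_d (gV k) H (gc k) (Suc (gz k)) (real (k*k)) R ab nxt C" and s: "\<not> ab 0"
  shows "real (k*k) \<le> R"
proof -
  have Ct: "C (Suc (gz k)) = 0" using ve by (simp add: valid_eval_d_def)
  have "\<forall>u. gz k - u = n \<longrightarrow> u \<le> gz k \<longrightarrow> \<not> ab u \<longrightarrow> real (k*k) \<le> R" for n
  proof (induction n rule: less_induct)
    case (less n)
    show ?case
    proof (intro allI impI)
      fix u assume un: "gz k - u = n" and uz: "u \<le> gz k" and al: "\<not> ab u"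
      have uV: "u \<in> gV k" "u \<noteq> Suc (gz k)" using uz by (auto simp: gV_def)
      note a = ved_alive[OF ve uV al]
      show "real (k*k) \<le> R"
      proof (cases "u = gz k")
        case True
        then have "nxt u = Suc (gz k)" using a H gE_out_z by blast
        then show ?thesis using a True Ct by (simp add: gc_def gz_def)
      next
        case False
        then have "u < nxt u \<and> nxt u \<le> gz k" using a H gE_out uz by fastforce
        then show ?thesis using less.IH[of "gz k - nxt u"] un a by auto
      qed
    qed
  qed
  then show ?thesis using s by auto
qed


definition Nw :: "nat \<Rightarrow> nat \<Rightarrow> real" where
  "Nw k i = real (k - i) * (real k - 1) + 1 - real k * real k"

lemma gd_kk: "k \<ge> 2 \<Longrightarrow> real (k*k - 1) * gd k = real k - 1"
proof -
  assume k: "k \<ge> 2"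
  have "real (k*k - 1) = (real k - 1) * (real k + 1)" using k by (simp add: of_nat_diff algebra_simps)
  then show ?thesis by (simp add: gd_def)
qed

lemma chain_arith:
  assumes k: "k \<ge> 2" and i: "i < k" and x: "0 \<le> x" "x \<le> real (k*k) - 2"
  shows "real (k*k) * gd k + x * gd k + Nw k (Suc i) \<le> 0"
proof -
  have gd: "0 < gd k" by (simp add: gd_def)
  have "real (k*k) * gd k + x * gd k = (real (k*k) + x) * gd k" by (simp add: algebra_simps)
  also have "\<dots> \<le> (2 * real (k*k) - 2) * gd k" using x gd by (intro mult_right_mono) auto
  also have "\<dots> = 2 * (real (k*k - 1) * gd k)" using k by (simp add: of_nat_diff algebra_simps)
  also have "\<dots> = 2 * (real k - 1)" using gd_kk[OF k] by simp
  finally have a: "real (k*k) * gd k + x * gd k \<le> 2 * (real k - 1)" .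
  have "real (k - Suc i) \<le> real k - 1" using i by simp
  then have "real (k - Suc i) * (real k - 1) \<le> (real k - 1) * (real k - 1)"
    using k by (intro mult_right_mono) auto
  then have "Nw k (Suc i) \<le> 2 - 2 * real k" by (simp add: Nw_def algebra_simps)
  then show ?thesis using a by simp
qed

lemma chain_node:
  assumes k: "k \<ge> 2" and i: "i < k" and j: "1 \<le> j" "j < k*k"
  shows "\<not> gW k (i*(k*k)+1+j)" "i*(k*k)+1+j < gz k" "i*(k*k)+1+j \<noteq> 0"
    "(i*(k*k)+1+j, v) \<in> gE k \<longleftrightarrow> v = Suc (i*(k*k)+1+j)"
    "gc k (i*(k*k)+1+j, Suc (i*(k*k)+1+j)) = gd k"
proof -
  show nw: "\<not> gW k (i*(k*k)+1+j)" using gW_mod[OF j(2)] j by simp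
  have "(i+1)*(k*k) \<le> k*(k*k)" using i by (intro mult_le_mono1) simp
  then show lt: "i*(k*k)+1+j < gz k" using j by (simp add: gz_def)
  show "i*(k*k)+1+j \<noteq> 0" by simp
  show "(i*(k*k)+1+j, v) \<in> gE k \<longleftrightarrow> v = Suc (i*(k*k)+1+j)" using nw lt by (auto simp: gE_iff)
  show "gc k (i*(k*k)+1+j, Suc (i*(k*k)+1+j)) = gd k" using nw lt by (simp add: gc_def)
qed

context
  fixes k :: nat and r :: "nat \<times> nat \<Rightarrow> real" and ab nxt N
  assumes k: "k \<ge> 2"
    and ve: "valid_eval_i (gV k) (gE k) (gc k) (Suc (gz k)) (real (k*k)) r ab nxt N"
    and rnn: "\<forall>e\<in>gE k. 0 \<le> r e"
begin

lemma finE: "finite (gE k)"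
proof -
  have "gE k \<subseteq> gV k \<times> gV k" using gE_less by (fastforce simp: gV_def)
  then show ?thesis by (rule finite_subset) (simp add: gV_def)
qed

lemma inV: "u \<le> gz k \<Longrightarrow> u \<in> gV k \<and> u \<noteq> Suc (gz k)"
  by (auto simp: gV_def)

lemma chain_alive:
  assumes i: "i < k" and n: "1 \<le> j0" "j0 \<le> k*k"
  shows "\<not> ab (i*(k*k)+1+j0) \<longrightarrow> \<not> ab (i*(k*k)+1+k*k)
     \<and> N (i*(k*k)+1+j0) \<le> real (k*k - j0) * gd k + N (i*(k*k)+1+k*k)
     \<and> N (i*(k*k)+1+k*k) + real (k*k - j0) * gd k + TT (gE k) r (i*(k*k)+1+k*k)
         \<le> N (i*(k*k)+1+j0) + TT (gE k) r (i*(k*k)+1+j0)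
     \<and> TT (gE k) r (i*(k*k)+1+k*k) \<le> TT (gE k) r (i*(k*k)+1+j0)"
  using n(2)
proof (induction j0 rule: inc_induct)
  case base then show ?case by simp
next
  case (step n)
  let ?u = "i*(k*k)+1+n"
  have n1: "1 \<le> n" using n(1) step(1) by linarith
  show ?case
  proof
    assume al: "\<not> ab ?u"
    have cn: "(?u, v) \<in> gE k \<longleftrightarrow> v = Suc ?u" for v using chain_node[OF k i n1 step(2)] by blast
    have lt: "?u < gz k" using chain_node[OF k i n1 step(2)] by blast
    have gc: "gc k (?u, Suc ?u) = gd k" using chain_node[OF k i n1 step(2)] by blast
    note a = vei_alive[OF ve conjunct1[OF inV] conjunct2[OF inV] al, OF less_imp_le[OF lt] less_imp_le[OF lt]]
    have nx: "nxt ?u = Suc ?u" using a cn by blast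
    have eq: "Suc ?u = i*(k*k)+1+Suc n" by simp
    have IH: "\<not> ab (i*(k*k)+1+k*k)
     \<and> N (Suc ?u) \<le> real (k*k - Suc n) * gd k + N (i*(k*k)+1+k*k)
     \<and> N (i*(k*k)+1+k*k) + real (k*k - Suc n) * gd k + TT (gE k) r (i*(k*k)+1+k*k)
         \<le> N (Suc ?u) + TT (gE k) r (Suc ?u)
     \<and> TT (gE k) r (i*(k*k)+1+k*k) \<le> TT (gE k) r (Suc ?u)"
      using step(3) a nx eq by simp
    have rn: "0 \<le> r (?u, Suc ?u)" using rnn cn by blast
    have ts: "r (?u, Suc ?u) + TT (gE k) r (Suc ?u) \<le> TT (gE k) r ?u"
      using TT_step[OF finE rnn] cn by blast
    have Nu: "N ?u = gd k - r (?u, Suc ?u) + N (Suc ?u)" using a nx gc by simp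
    have rr: "real (k*k - n) = real (k*k - Suc n) + 1" using step(2) by linarith
    show "\<not> ab (i*(k*k)+1+k*k)
     \<and> N ?u \<le> real (k*k - n) * gd k + N (i*(k*k)+1+k*k)
     \<and> N (i*(k*k)+1+k*k) + real (k*k - n) * gd k + TT (gE k) r (i*(k*k)+1+k*k)
         \<le> N ?u + TT (gE k) r ?u
     \<and> TT (gE k) r (i*(k*k)+1+k*k) \<le> TT (gE k) r ?u"
      using IH rn ts Nu rr TT_nonneg[OF rnn] by (simp add: algebra_simps)
  qed
qed


lemma chain_forced:
  assumes i: "i < k" and n: "1 \<le> j0" "j0 \<le> k*k"
    and w: "\<not> ab (i*(k*k)+1+k*k)" "N (i*(k*k)+1+k*k) \<le> Nw k (Suc i)"
  shows "\<not> ab (i*(k*k)+1+j0) \<and> N (i*(k*k)+1+j0) \<le> real (k*k - j0) * gd k + N (i*(k*k)+1+k*k)"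
  using n(2)
proof (induction j0 rule: inc_induct)
  case base then show ?case using w by simp
next
  case (step n)
  let ?u = "i*(k*k)+1+n"
  have n1: "1 \<le> n" using n(1) step(1) by linarith
  have cn: "(?u, v) \<in> gE k \<longleftrightarrow> v = Suc ?u" for v using chain_node[OF k i n1 step(2)] by blast
  have lt: "?u < gz k" using chain_node[OF k i n1 step(2)] by blast
  have gc: "gc k (?u, Suc ?u) = gd k" using chain_node[OF k i n1 step(2)] by blast
  have eq: "Suc ?u = i*(k*k)+1+Suc n" by simp
  have IH: "\<not> ab (Suc ?u) \<and> N (Suc ?u) \<le> real (k*k - Suc n) * gd k + N (i*(k*k)+1+k*k)"
    using step(3) eq by simp
  have rn: "0 \<le> r (?u, Suc ?u)" using rnn cn by blast
  have gdp: "0 < gd k" by (simp add: gd_def)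
  have sn: "real (Suc n) \<le> real k * real k" using step(2) by (metis Suc_leI of_nat_le_iff of_nat_mult)
  have x: "0 \<le> real (k*k - Suc n)" "real (k*k - Suc n) \<le> real (k*k) - 2"
    using n1 step(2) sn by (auto simp: of_nat_diff)
  have "real (k*k) * gd k - r (?u, Suc ?u) + N (Suc ?u)
      \<le> real (k*k) * gd k + real (k*k - Suc n) * gd k + Nw k (Suc i)"
    using IH rn w(2) by simp
  also have "\<dots> \<le> 0" by (rule chain_arith[OF k i x])
  finally have pi: "real (k*k) * gc k (?u, Suc ?u) - r (?u, Suc ?u) + N (Suc ?u) \<le> 0" using gc by simp
  have uv: "?u \<in> gV k" "?u \<noteq> Suc (gz k)" using inV[of ?u] lt by auto
  have al: "\<not> ab ?u" using vei_force[OF ve uv _ _ pi] cn IH by blast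
  note a = vei_alive[OF ve uv al]
  have nx: "nxt ?u = Suc ?u" using a cn by blast
  have Nu: "N ?u = gd k - r (?u, Suc ?u) + N (Suc ?u)" using a nx gc by simp
  have rr: "real (k*k - n) = real (k*k - Suc n) + 1" using step(2) by linarith
  show ?case using al Nu IH rn rr by (simp add: algebra_simps)
qed


lemma gadget:
  assumes i: "i \<le> k"
  shows "\<not> ab (i*(k*k)+1) \<longrightarrow> N (i*(k*k)+1) \<le> Nw k i \<and> real (k*k) \<le> TT (gE k) r (i*(k*k)+1)
     \<and> (real (k*k) + (real k - 1)^2 \<le> TT (gE k) r (i*(k*k)+1)
        \<or> real (k - i) * (real k - 1) + 1 \<le> N (i*(k*k)+1) + TT (gE k) r (i*(k*k)+1))"
  using i
proof (induction i rule: inc_induct)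
  case base
  let ?z = "gz k"
  have zz: "k*(k*k)+1 = ?z" by (simp add: gz_def)
  show ?case unfolding zz
  proof
    assume al: "\<not> ab ?z"
    note a = vei_alive[OF ve conjunct1[OF inV] conjunct2[OF inV] al, OF order_refl order_refl]
    have nx: "nxt ?z = Suc ?z" using a gE_out_z by blast
    have Nt: "N (Suc ?z) = 0" using ve by (simp add: valid_eval_i_def)
    have gc: "gc k (?z, Suc ?z) = 1" by (simp add: gc_def gz_def)
    have rge: "real (k*k) \<le> r (?z, Suc ?z)" using a nx Nt gc by simp
    have Nz: "N ?z = 1 - r (?z, Suc ?z)" using a nx Nt gc by simp
    have ts: "r (?z, Suc ?z) + TT (gE k) r (Suc ?z) \<le> TT (gE k) r ?z"
      using TT_step[OF finE rnn] a nx by simp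
    have tn: "0 \<le> TT (gE k) r (Suc ?z)" using TT_nonneg[OF rnn] .
    show "N ?z \<le> Nw k k \<and> real (k*k) \<le> TT (gE k) r ?z
     \<and> (real (k*k) + (real k - 1)^2 \<le> TT (gE k) r ?z
        \<or> real (k - k) * (real k - 1) + 1 \<le> N ?z + TT (gE k) r ?z)"
      using rge Nz ts tn by (simp add: Nw_def)
  qed
next
  case (step i)
  let ?w = "i*(k*k)+1"
  let ?w' = "i*(k*k)+1+k*k"
  let ?m = "i*(k*k)+1+1"
  have ww: "Suc i*(k*k)+1 = ?w'" by simp
  have IH: "\<not> ab ?w' \<longrightarrow> N ?w' \<le> Nw k (Suc i) \<and> real (k*k) \<le> TT (gE k) r ?w'
     \<and> (real (k*k) + (real k - 1)^2 \<le> TT (gE k) r ?w'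
        \<or> real (k - Suc i) * (real k - 1) + 1 \<le> N ?w' + TT (gE k) r ?w')"
    using step(3) unfolding ww .
  have W: "gW k ?w" using step(2) by (auto simp: gW_def)
  have wb: "?w < gz k" "?w' \<le> gz k" using gW_bounds[OF W] by auto
  have out: "(?w, v) \<in> gE k \<longleftrightarrow> v = ?m \<or> v = ?w'" for v using W wb by (auto simp: gE_iff)
  have gcm: "gc k (?w, ?m) = 0" using W wb by (simp add: gc_def)
  have ne: "?w' \<noteq> Suc ?w" using k by simp
  have gcw: "gc k (?w, ?w') = gp k" using ne unfolding gc_def by (simp only: split_conv if_False)
  have k4: "2*2 \<le> k*k" using k by (intro mult_le_mono) auto
  have kk1: "1 \<le> k*k - 1" "k*k - 1 \<le> k*k" "1 \<le> (1::nat)" "(1::nat) \<le> k*k" using k4 k by auto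
  have Nwi: "Nw k i = Nw k (Suc i) + (real k - 1)" using step(2) by (simp add: Nw_def of_nat_diff algebra_simps)
  have cm1: "real (k*k - 1) * gd k = real k - 1" using gd_kk[OF k] .
  have p: "0 \<le> gp k" "gp k \<le> 1" "real (k*k) * gp k = real (k*k) - real k"
    using gp_props[OF k] gp_kk[OF k] by auto
  show ?case
  proof
    assume al: "\<not> ab ?w"
    have uv: "?w \<in> gV k" "?w \<noteq> Suc (gz k)" using inV[of ?w] wb by auto
    note a = vei_alive[OF ve uv al]
    have ts: "\<And>v. (?w, v) \<in> gE k \<Longrightarrow> r (?w, v) + TT (gE k) r v \<le> TT (gE k) r ?w"
      using TT_step[OF finE rnn] gE_less by blast
    have rn: "\<And>v. (?w, v) \<in> gE k \<Longrightarrow> 0 \<le> r (?w, v)" using rnn by blast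
    from a out have "nxt ?w = ?m \<or> nxt ?w = ?w'" by blast
    then show "N ?w \<le> Nw k i \<and> real (k*k) \<le> TT (gE k) r ?w
     \<and> (real (k*k) + (real k - 1)^2 \<le> TT (gE k) r ?w
        \<or> real (k - i) * (real k - 1) + 1 \<le> N ?w + TT (gE k) r ?w)"
    proof
      assume nx: "nxt ?w = ?w'"
      have alw: "\<not> ab ?w'" using a nx by simp
      have I: "N ?w' \<le> Nw k (Suc i)" "real (k*k) \<le> TT (gE k) r ?w'" using IH alw by auto
      have F: "\<not> ab ?m \<and> N ?m \<le> real (k*k - 1) * gd k + N ?w'"
        using chain_forced[OF step(2) kk1(3) kk1(4) alw I(1)] by simp
      have pref: "real (k*k) * gp k - r (?w, ?w') + N ?w' \<le> real (k*k) * 0 - r (?w, ?m) + N ?m"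
        using a nx F out gcm gcw by (metis (no_types, lifting))
      have rm: "0 \<le> r (?w, ?m)" using rn out by blast
      have rg: "(real k - 1)^2 \<le> r (?w, ?w')"
        using pref F cm1 rm p(3) by (simp add: power2_eq_square algebra_simps)
      have t1: "r (?w, ?w') + TT (gE k) r ?w' \<le> TT (gE k) r ?w" using ts out by blast
      have Nw': "N ?w = gp k - r (?w, ?w') + N ?w'" using a nx gcw by simp
      have k1: "1 \<le> real k - 1" using k by simp
      have sq: "0 \<le> (real k - 1)^2" by simp
      have g1: "N ?w \<le> Nw k i" using rg t1 Nw' I Nwi p k1 sq by linarith
      have g2: "real (k*k) + (real k - 1)^2 \<le> TT (gE k) r ?w" using rg t1 Nw' I Nwi p k1 sq by linarith
      have g3: "real (k*k) \<le> TT (gE k) r ?w" using g2 sq by linarith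
      show ?thesis using g1 g2 g3 by blast
    next
      assume nx: "nxt ?w = ?m"
      have alm: "\<not> ab ?m" using a nx by simp
      have C: "\<not> ab ?w' \<and> N ?m \<le> real (k*k - 1) * gd k + N ?w'
        \<and> N ?w' + real (k*k - 1) * gd k + TT (gE k) r ?w' \<le> N ?m + TT (gE k) r ?m
        \<and> TT (gE k) r ?w' \<le> TT (gE k) r ?m"
        using chain_alive[OF step(2) kk1(3) kk1(4)] alm by simp
      have I: "N ?w' \<le> Nw k (Suc i)" "real (k*k) \<le> TT (gE k) r ?w'"
        "real (k*k) + (real k - 1)^2 \<le> TT (gE k) r ?w'
        \<or> real (k - Suc i) * (real k - 1) + 1 \<le> N ?w' + TT (gE k) r ?w'" using IH C by auto
      have Nm: "N ?w = - r (?w, ?m) + N ?m" using a nx gcm by simp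
      have t1: "r (?w, ?m) + TT (gE k) r ?m \<le> TT (gE k) r ?w" using ts out by blast
      have rm: "0 \<le> r (?w, ?m)" using rn out by blast
      have ki: "real (k - i) = real (k - Suc i) + 1" using step(2) by linarith
      show ?thesis using I C Nm t1 rm Nwi cm1 ki by (auto simp: algebra_simps)
    qed
  qed
qed


end


context
  fixes k :: nat and r :: "nat \<times> nat \<Rightarrow> real" and ab nxt N
  assumes k: "k \<ge> 2"
    and ve: "valid_eval_i (gV k) (gE k) (gc k) (Suc (gz k)) (real (k*k)) r ab nxt N"
    and rnn: "\<forall>e\<in>gE k. 0 \<le> r e"
begin

lemma final_lb:
  assumes s: "\<not> ab 0"
  shows "real (k*k) + (real k - 1)^2 \<le> (\<Sum>e\<in>gE k. r e)"
proof -
  have z0: "0 < gz k" by (simp add: gz_def)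
  have uv: "(0::nat) \<in> gV k" "(0::nat) \<noteq> Suc (gz k)" using inV[OF k ve rnn, of 0] by auto
  note a = vei_alive[OF ve uv s]
  have nW0: "\<not> gW k 0" using gW_bounds(1)[of k 0] by auto
  have out: "(0, v) \<in> gE k \<longleftrightarrow> v = 1" for v using nW0 by (auto simp: gE_iff)
  have nx: "nxt 0 = 1" using a out by blast
  have gc: "gc k (0, 1) = gp k" by (simp add: gc_def)
  have pi: "real (k*k) * gp k - r (0, 1) + N 1 \<le> 0" using a nx gc by simp
  have al1: "\<not> ab 1" using a nx by simp
  have G: "N 1 \<le> Nw k 0 \<and> real (k*k) \<le> TT (gE k) r 1
     \<and> (real (k*k) + (real k - 1)^2 \<le> TT (gE k) r 1
        \<or> real (k - 0) * (real k - 1) + 1 \<le> N 1 + TT (gE k) r 1)"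
    using gadget[OF k ve rnn, of 0] al1 by simp
  have ts: "r (0, 1) + TT (gE k) r 1 \<le> TT (gE k) r 0" using TT_step[OF finE[OF k ve rnn] rnn] out by simp
  have rn: "0 \<le> r (0, 1)" using rnn out by blast
  have p: "real (k*k) * gp k = real (k*k) - real k" using gp_kk[OF k] by simp
  have sq: "(real k - 1)^2 = real (k*k) - 2 * real k + 1" by (simp add: power2_eq_square algebra_simps)
  have "real (k*k) + (real k - 1)^2 \<le> TT (gE k) r 0"
    using G ts rn pi p sq by (auto simp: algebra_simps)
  then show ?thesis by (simp add: TT0)
qed

end

lemma vei_intro:
  assumes "N t = 0"
    and "\<And>u. u \<in> V \<Longrightarrow> u \<noteq> t \<Longrightarrow> (u, nxt u) \<in> E \<and> b * c (u, nxt u) - r (u, nxt u) + N (nxt u) \<le> 0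
       \<and> (\<forall>v. (u, v) \<in> E \<longrightarrow> b * c (u, nxt u) - r (u, nxt u) + N (nxt u) \<le> b * c (u, v) - r (u, v) + N v)
       \<and> N u = c (u, nxt u) - r (u, nxt u) + N (nxt u)"
  shows "valid_eval_i V E c t b r (\<lambda>_. False) nxt N"
  unfolding valid_eval_i_def Let_def
proof (rule conjI, simp, rule conjI, rule assms(1), intro ballI impI)
  fix u assume u: "u \<in> V" "u \<noteq> t"
  note h = assms(2)[OF u]
  show "(False \<longleftrightarrow> ({v. (u, v) \<in> E \<and> \<not> False} = {} \<or> (\<forall>v\<in>{v. (u, v) \<in> E \<and> \<not> False}. 0 < b * c (u, v) - r (u, v) + N v))) \<and>
         (\<not> False \<longrightarrow> nxt u \<in> {v. (u, v) \<in> E \<and> \<not> False} \<and>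
           (\<forall>v\<in>{v. (u, v) \<in> E \<and> \<not> False}. b * c (u, nxt u) - r (u, nxt u) + N (nxt u) \<le> b * c (u, v) - r (u, v) + N v) \<and>
           N u = c (u, nxt u) - r (u, nxt u) + N (nxt u))"
    using h by force
qed

definition rI :: "nat \<Rightarrow> nat \<times> nat \<Rightarrow> real" where
  "rI k e = (if e = (gz k, Suc (gz k)) then real (k*k) else 0) + (if e = (0, 1) then (real k - 1)^2 else 0)"

definition NI :: "nat \<Rightarrow> nat \<Rightarrow> real" where
  "NI k u = (if u = 0 then gp k - (real k - 1)^2 + Nw k 0 else if u = Suc (gz k) then 0
     else if (u - 1) mod (k*k) = 0 then Nw k ((u - 1) div (k*k))
     else real (k*k - (u - 1) mod (k*k)) * gd k + Nw k (Suc ((u - 1) div (k*k))))"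

lemma NI_node: assumes "j < k*k" "i*(k*k)+1+j \<noteq> Suc (gz k)" "k \<ge> 2"
  shows "NI k (i*(k*k)+1+j) = (if j = 0 then Nw k i else real (k*k - j) * gd k + Nw k (Suc i))"
  using assms by (simp add: NI_def)

lemma node_decomp: assumes k: "k \<ge> 2" and u: "1 \<le> u" "u \<le> gz k"
  obtains i j where "u = i*(k*k)+1+j" "j < k*k" "i < k \<or> (i = k \<and> j = 0)"
proof -
  define i where "i = (u - 1) div (k*k)"
  define j where "j = (u - 1) mod (k*k)"
  have kk: "0 < k*k" using k by simp
  have dm: "i*(k*k) + j = u - 1" unfolding i_def j_def by (rule div_mult_mod_eq)
  have e: "u = i*(k*k)+1+j" using dm u(1) by linarith
  have jl: "j < k*k" using kk by (simp add: j_def)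
  have le: "u - 1 \<le> k*(k*k)" using u(2) by (simp add: gz_def)
  have "i \<le> (k*(k*k)) div (k*k)" unfolding i_def using le by (rule div_le_mono)
  then have il: "i \<le> k" using kk by simp
  have "i = k \<Longrightarrow> j = 0" using dm le by simp
  then show ?thesis using that e jl il by (metis le_neq_implies_less)
qed


lemma rI_simps: "rI k (0, 1) = (real k - 1)^2" "rI k (gz k, Suc (gz k)) = real (k*k)"
  "u \<noteq> 0 \<Longrightarrow> u \<noteq> gz k \<Longrightarrow> rI k (u, v) = 0"
  by (auto simp: rI_def gz_def)

lemma int_eval: assumes k: "k \<ge> 2"
  shows "valid_eval_i (gV k) (gE k) (gc k) (Suc (gz k)) (real (k*k)) (rI k) (\<lambda>_. False) Suc (NI k)"
proof (rule vei_intro)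
  show "NI k (Suc (gz k)) = 0" by (simp add: NI_def)
next
  fix u assume uV: "u \<in> gV k" and ut: "u \<noteq> Suc (gz k)"
  have uz: "u \<le> gz k" using uV ut by (auto simp: gV_def)
  let ?pi = "\<lambda>v. real (k*k) * gc k (u, v) - rI k (u, v) + NI k v"
  have p: "0 \<le> gp k" "gp k \<le> 1" "real (k*k) * gp k = real (k*k) - real k" using gp_props[OF k] gp_kk[OF k] by auto
  have cm1: "real (k*k - 1) * gd k = real k - 1" using gd_kk[OF k] .
  have k4: "2*2 \<le> k*k" using k by (intro mult_le_mono) auto
  have z0: "gz k \<noteq> 0" by (simp add: gz_def)
  show "(u, Suc u) \<in> gE k \<and> ?pi (Suc u) \<le> 0 \<and> (\<forall>v. (u, v) \<in> gE k \<longrightarrow> ?pi (Suc u) \<le> ?pi v)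
        \<and> NI k u = gc k (u, Suc u) - rI k (u, Suc u) + NI k (Suc u)"
  proof (cases "u = 0")
    case True
    have nW0: "\<not> gW k 0" using gW_bounds(1)[of k 0] by auto
    have out: "(0, v) \<in> gE k \<longleftrightarrow> v = 1" for v using nW0 by (auto simp: gE_iff)
    have N1: "NI k 1 = Nw k 0" using NI_node[of 0 k 0] k by (simp add: gz_def)
    have gc: "gc k (0, 1) = gp k" by (simp add: gc_def)
    have N0: "NI k 0 = gp k - (real k - 1)^2 + Nw k 0" by (simp add: NI_def)
    have Nw0: "Nw k 0 = real k * (real k - 1) + 1 - real k * real k" by (simp add: Nw_def)
    have rI01: "rI k (0, Suc 0) = (real k - 1)^2" by (simp add: rI_def gz_def)
    have "?pi 1 = 0" using True p N1 gc Nw0 rI01 by (simp add: power2_eq_square algebra_simps)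
    then show ?thesis using True out N1 gc N0 rI01 by simp
  next
    case u0: False
    obtain i j where ij: "u = i*(k*k)+1+j" "j < k*k" "i < k \<or> (i = k \<and> j = 0)"
      using node_decomp[OF k _ uz] u0 by (metis One_nat_def Suc_leI neq0_conv)
    show ?thesis
    proof (cases "i = k \<and> j = 0")
      case True
      then have uz': "u = gz k" using ij by (simp add: gz_def)
      have out: "(u, v) \<in> gE k \<longleftrightarrow> v = Suc u" for v using gE_out_z[of k v] uz' by (auto simp: gE_iff)
      have Nz: "NI k u = 1 - real k * real k" using NI_node[of 0 k k] k True ij by (simp add: Nw_def gz_def)
      have gc: "gc k (u, Suc u) = 1" using uz' z0 by (simp add: gc_def)
      have Nt: "NI k (Suc u) = 0" using uz' by (simp add: NI_def)
      show ?thesis using out Nz gc Nt uz' by (simp add: rI_simps)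
    next
      case False
      then have ik: "i < k" using ij by blast
      show ?thesis
      proof (cases "j = 0")
        case True
        have uw: "u = i*(k*k)+1" using ij True by simp
        have W: "gW k u" using ik uw by (auto simp: gW_def)
        have wb: "u < gz k" "u + k*k \<le> gz k" using gW_bounds[OF W] by auto
        have out: "(u, v) \<in> gE k \<longleftrightarrow> v = Suc u \<or> v = u + k*k" for v using W wb by (auto simp: gE_iff)
        have Nu: "NI k u = Nw k i" using NI_node[of 0 k i] k uw wb by simp
        have Ns: "NI k (Suc u) = real (k*k - 1) * gd k + Nw k (Suc i)"
          using NI_node[of 1 k i] k k4 uw wb by simp
        have Nw': "NI k (u + k*k) = Nw k (Suc i)"
          using NI_node[of 0 k "Suc i"] k uw wb by (simp add: algebra_simps)
        have gc0: "gc k (u, Suc u) = 0" using W wb u0 by (simp add: gc_def)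
        have ne: "u + k*k \<noteq> Suc u" using k4 k by simp
        have gcw: "gc k (u, u + k*k) = gp k" using ne unfolding gc_def by (simp only: split_conv if_False)
        have r0: "rI k (u, v) = 0" for v using u0 wb by (simp add: rI_simps)
        have Nwi: "Nw k i = Nw k (Suc i) + (real k - 1)" using ik by (simp add: Nw_def of_nat_diff algebra_simps)
        have "real (k - Suc i) \<le> real k - 1" using ik by simp
        then have "real (k - Suc i) * (real k - 1) \<le> (real k - 1) * (real k - 1)"
          using k by (intro mult_right_mono) auto
        then have nb: "Nw k (Suc i) \<le> 2 - 2 * real k" by (simp add: Nw_def algebra_simps)
        have kk2: "real k - 1 \<le> real (k*k) - real k"
        proof -
          have "real k * 2 \<le> real k * real k" using k by (intro mult_left_mono) auto
          then show ?thesis by simp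
        qed
        have kr: "2 \<le> real k" using k by simp
        show ?thesis using out Nu Ns Nw' gc0 gcw r0 Nwi nb kk2 cm1 p kr by (auto simp: algebra_simps)
      next
        case j0: False
        have cn: "(u, v) \<in> gE k \<longleftrightarrow> v = Suc u" for v using chain_node[OF k ik _ ij(2)] j0 ij(1) by simp
        have gc: "gc k (u, Suc u) = gd k" using chain_node[OF k ik _ ij(2)] j0 ij(1) by simp
        have lt: "u < gz k" using chain_node[OF k ik _ ij(2)] j0 ij(1) by simp
        have Nu: "NI k u = real (k*k - j) * gd k + Nw k (Suc i)" using NI_node[of j k i] k ij j0 lt by simp
        have Ns: "NI k (Suc u) = real (k*k - Suc j) * gd k + Nw k (Suc i)"
        proof (cases "Suc j < k*k")
          case True
          then show ?thesis using NI_node[of "Suc j" k i] k ij lt by simp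
        next
          case False
          then have "Suc j = k*k" using ij by simp
          then have "Suc u = Suc i*(k*k)+1+0" using ij by simp
          moreover have "Suc u \<noteq> Suc (gz k)" using lt by simp
          ultimately show ?thesis using NI_node[of 0 k "Suc i"] k \<open>Suc j = k*k\<close> by simp
        qed
        have r0: "rI k (u, Suc u) = 0" using lt u0 by (simp add: rI_simps)
        have sn: "real (Suc j) \<le> real k * real k" using ij(2) by (metis Suc_leI of_nat_le_iff of_nat_mult)
        have x: "0 \<le> real (k*k - Suc j)" "real (k*k - Suc j) \<le> real (k*k) - 2"
          using j0 ij(2) sn by (auto simp: of_nat_diff)
        have pi: "real (k*k) * gd k + real (k*k - Suc j) * gd k + Nw k (Suc i) \<le> 0"
          by (rule chain_arith[OF k ik x])
        have rr: "real (k*k - j) = real (k*k - Suc j) + 1" using ij(2) by linarith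
        show ?thesis using cn gc Nu Ns r0 pi rr by (auto simp: algebra_simps)
      qed
    qed
  qed
qed


lemma finE': "finite (gE k)"
proof -
  have "gE k \<subseteq> gV k \<times> gV k" using gE_less by (fastforce simp: gV_def)
  then show ?thesis by (rule finite_subset) (simp add: gV_def)
qed

lemma sum_rI: assumes k: "k \<ge> 2" shows "(\<Sum>e\<in>gE k. rI k e) = real (k*k) + (real k - 1)^2"
proof -
  have m1: "(gz k, Suc (gz k)) \<in> gE k" by (simp add: gE_iff)
  have m2: "(0, 1) \<in> gE k" by (simp add: gE_iff)
  have "(\<Sum>e\<in>gE k. rI k e) = (\<Sum>e\<in>gE k. if e = (gz k, Suc (gz k)) then real (k*k) else 0)
      + (\<Sum>e\<in>gE k. if e = (0, 1) then (real k - 1)^2 else 0)"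
    unfolding rI_def by (rule sum.distrib)
  also have "\<dots> = real (k*k) + (real k - 1)^2" using m1 m2 finE'[of k] by (simp only: sum.delta if_True)
  finally show ?thesis .
qed

theorem theorem4:
  fixes \<epsilon> :: real
  assumes "\<epsilon> > 0"
  shows "\<exists>b::real. b > 1 \<and>
           (\<exists>V E c s t Rd Ri. dag_instance V E c s t
              \<and> is_min (feasible_d V E c s t b) Rd
              \<and> is_min (feasible_i V E c s t b) Ri
              \<and> Rd > 0
              \<and> Ri \<ge> (2 - \<epsilon>) * Rd)"
proof -
  define k where "k = max 2 (nat \<lceil>2 / \<epsilon>\<rceil>)"
  have k: "k \<ge> 2" by (simp add: k_def)
  have "2 / \<epsilon> \<le> real k" unfolding k_def by (metis max.cobounded2 of_nat_le_iff real_nat_ceiling_ge order_trans)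
  then have ek: "2 \<le> \<epsilon> * real k" using assms by (simp add: field_simps)
  have kr: "2 \<le> real k" using k by simp
  have b1: "real (k*k) > 1"
  proof -
    have "4 \<le> real k * real k" using kr mult_mono[OF kr kr] by simp
    then show ?thesis by simp
  qed
  have D: "is_min (feasible_d (gV k) (gE k) (gc k) 0 (Suc (gz k)) (real (k*k))) (real (k*k))"
    unfolding is_min_def feasible_d_def
  proof (intro conjI ballI)
    have "reaches_d (gV k) (gH k) (gc k) 0 (Suc (gz k)) (real (k*k)) (real (k*k))"
      unfolding reaches_d_def
      by (rule exI[of _ "abD k"], rule exI[of _ "nxtD k"], rule exI[of _ "CD k"], rule conjI[OF del_eval[OF k]]) (simp add: abD_def)
    then show "real (k*k) \<in> {R. 0 \<le> R \<and> (\<exists>H\<subseteq>gE k. reaches_d (gV k) H (gc k) 0 (Suc (gz k)) (real (k*k)) R)}"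
      using gH_sub by auto
  next
    fix y assume "y \<in> {R. 0 \<le> R \<and> (\<exists>H\<subseteq>gE k. reaches_d (gV k) H (gc k) 0 (Suc (gz k)) (real (k*k)) R)}"
    then obtain H ab nxt C where "H \<subseteq> gE k" "valid_eval_d (gV k) H (gc k) (Suc (gz k)) (real (k*k)) y ab nxt C" "\<not> ab 0"
      unfolding reaches_d_def by auto
    then show "real (k*k) \<le> y" using del_lb[OF k] by blast
  qed
  have I: "is_min (feasible_i (gV k) (gE k) (gc k) 0 (Suc (gz k)) (real (k*k))) (real (k*k) + (real k - 1)^2)"
    unfolding is_min_def feasible_i_def
  proof (intro conjI ballI)
    have nn: "\<forall>e\<in>gE k. 0 \<le> rI k e" by (simp add: rI_def)
    have "reaches_i (gV k) (gE k) (gc k) 0 (Suc (gz k)) (real (k*k)) (rI k)"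
      unfolding reaches_i_def using int_eval[OF k] by blast
    then show "real (k*k) + (real k - 1)^2 \<in> {\<Sum>e\<in>gE k. r e |r. (\<forall>e\<in>gE k. 0 \<le> r e) \<and> reaches_i (gV k) (gE k) (gc k) 0 (Suc (gz k)) (real (k*k)) r}"
      using nn sum_rI[OF k] by (auto intro!: exI[of _ "rI k"])
  next
    fix y assume "y \<in> {\<Sum>e\<in>gE k. r e |r. (\<forall>e\<in>gE k. 0 \<le> r e) \<and> reaches_i (gV k) (gE k) (gc k) 0 (Suc (gz k)) (real (k*k)) r}"
    then obtain r ab nxt N where y: "y = (\<Sum>e\<in>gE k. r e)" "\<forall>e\<in>gE k. 0 \<le> r e"
      "valid_eval_i (gV k) (gE k) (gc k) (Suc (gz k)) (real (k*k)) r ab nxt N" "\<not> ab 0"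
      unfolding reaches_i_def by auto
    show "real (k*k) + (real k - 1)^2 \<le> y" using final_lb[OF k y(3) y(2) y(4)] y(1) by simp
  qed
  have R: "(2 - \<epsilon>) * real (k*k) \<le> real (k*k) + (real k - 1)^2"
  proof -
    have "2 * real k \<le> \<epsilon> * real k * real k" using ek kr by (intro mult_right_mono) auto
    then show ?thesis by (simp add: power2_eq_square algebra_simps)
  qed
  show ?thesis
    apply (rule exI[of _ "real (k*k)"])
    apply (rule conjI[OF b1])
    apply (rule exI[of _ "gV k"], rule exI[of _ "gE k"], rule exI[of _ "gc k"], rule exI[of _ 0],
           rule exI[of _ "Suc (gz k)"], rule exI[of _ "real (k*k)"], rule exI[of _ "real (k*k) + (real k - 1)^2"])
    using dag[OF k] D I R b1 by simp
qed

end
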